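(* Let $S$ be a real symmetric positive definite $n\times n$ matrix which is irreducible. Define \[{\operatorname{mr_{dual}}}(S)=\min\{\operatorname{rank}(\hat S)\mid S=E-\hat S,\ \hat S\ge 0,\ E\ge 0,\ E\text{ diagonal}\},\] where $\hat S,E$ range over real symmetric $n\times n$ matrices. Then ${\operatorname{mr_{dual}}}(S)=n-1$ if and only if $S\succeq_e 0$.
   Context: $M\ge0$ means positive semidefinite. A square matrix is irreducible if it cannot be brought into block-diagonal form (with at least two diagonal blocks) by a simultaneous permutation of its rows and columns. For a real square matrix $M$, $M\succeq_e 0$ means that the off-diagonal entries of $M$ are all $\ge 0$, or can be made so by changing the signs of selected rows and the corresponding columns (i.e. there is a diagonal matrix $P$ with diagonal entries $\pm1$ such that $PMP$ has all off-diagonal entries $\ge 0$). *)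

theory Defs
  imports "HOL-Analysis.Analysis"
begin

definition symmetric_mat :: "real^'n^'n \<Rightarrow> bool" where
  "symmetric_mat M \<longleftrightarrow> transpose M = M"

definition psd :: "real^'n^'n \<Rightarrow> bool" where
  "psd M \<longleftrightarrow> symmetric_mat M \<and> (\<forall>x. 0 \<le> x \<bullet> (M *v x))"

definition pos_def :: "real^'n^'n \<Rightarrow> bool" where
  "pos_def M \<longleftrightarrow> symmetric_mat M \<and> (\<forall>x. x \<noteq> 0 \<longrightarrow> 0 < x \<bullet> (M *v x))"

definition diagonal_mat :: "real^'n^'n \<Rightarrow> bool" where
  "diagonal_mat M \<longleftrightarrow> (\<forall>i j. i \<noteq> j \<longrightarrow> M $ i $ j = 0)"

text \<open>A simultaneous permutation of rows and columns brings M into block-diagonal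
  form with at least two diagonal blocks iff the index set splits into two nonempty
  parts I and its complement with all entries between them zero.\<close>
definition irreducible_mat :: "real^'n^'n \<Rightarrow> bool" where
  "irreducible_mat M \<longleftrightarrow>
     \<not> (\<exists>I. I \<noteq> {} \<and> I \<noteq> UNIV \<and>
            (\<forall>i\<in>I. \<forall>j. j \<notin> I \<longrightarrow> M $ i $ j = 0 \<and> M $ j $ i = 0))"

definition diag_mat :: "('n \<Rightarrow> real) \<Rightarrow> real^'n^'n" where
  "diag_mat d = (\<chi> i j. if i = j then d i else 0)"

definition sign_nonneg :: "real^'n^'n \<Rightarrow> bool" where
  "sign_nonneg M \<longleftrightarrow>
     (\<exists>d :: 'n \<Rightarrow> real. (\<forall>i. d i = 1 \<or> d i = -1) \<and>
        (\<forall>i j. i \<noteq> j \<longrightarrow> 0 \<le> (diag_mat d ** M ** diag_mat d) $ i $ j))"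

definition mr_dual :: "real^'n^'n \<Rightarrow> nat" where
  "mr_dual S = Min {rank Sh | Sh E. S = E - Sh \<and> psd Sh \<and> psd E \<and> diagonal_mat E}"

end

theory Submission
  imports Defs
begin


lemma qf_expand: "x \<bullet> (M *v x) = (\<Sum>i\<in>UNIV. \<Sum>j\<in>UNIV. x$i * M$i$j * x$j)"
  for M :: "real^'n^'n"
  by (simp add: inner_vec_def matrix_vector_mult_def sum_distrib_left mult.assoc)

lemma inner_sym:
  fixes M :: "real^'n^'n"
  assumes "transpose M = M"
  shows "x \<bullet> (M *v y) = y \<bullet> (M *v x)"
proof -
  have "x \<bullet> (M *v y) = (x v* M) \<bullet> y" by (simp add: dot_lmul_matrix)
  also have "x v* M = M *v x"
    by (metis assms vector_transpose_matrix)
  finally show ?thesis by (simp add: inner_commute)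
qed

lemma psd_kernel:
  fixes M :: "real^'n^'n"
  assumes "psd M" "x \<bullet> (M *v x) = 0"
  shows "M *v x = 0"
proof -
  have sym: "transpose M = M" and nn: "\<And>z. 0 \<le> z \<bullet> (M *v z)"
    using assms(1) by (auto simp: psd_def symmetric_mat_def)
  define y where "y = M *v x"
  define a where "a = y \<bullet> y"
  define b where "b = y \<bullet> (M *v y)"
  have b0: "0 \<le> b" using nn b_def by auto
  have a0: "0 \<le> a" using a_def by auto
  have ex: "(x + t *\<^sub>R y) \<bullet> (M *v (x + t *\<^sub>R y)) = 2 * t * a + t^2 * b" for t
  proof -
    have "x \<bullet> (M *v y) = y \<bullet> (M *v x)" using inner_sym[OF sym] by blast
    then show ?thesis using assms(2)
      by (simp add: matrix_vector_right_distrib matrix_vector_mult_scaleR inner_add_left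
          inner_add_right a_def b_def y_def power2_eq_square algebra_simps)
  qed
  define t where "t = - a / (b + 1)"
  have "0 \<le> 2 * t * a + t^2 * b" using nn[of "x + t *\<^sub>R y"] ex by simp
  then have "0 \<le> (2 * t * a + t^2 * b) * (b+1)^2" using b0 by simp
  also have "(2 * t * a + t^2 * b) * (b+1)^2 = 2*a*(t*(b+1))*(b+1) + b*(t*(b+1))^2"
    by (simp add: power2_eq_square algebra_simps)
  also have "t * (b+1) = -a" using b0 by (simp add: t_def)
  also have "2*a*(-a)*(b+1) + b*(-a)^2 = -(a^2 * (b + 2))"
    by (simp add: power2_eq_square algebra_simps)
  finally have "a^2 * (b+2) \<le> 0" by simp
  then have "a = 0" using b0
    by (smt (verit) mult_pos_pos zero_less_power2)
  then show ?thesis by (simp add: a_def y_def)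
qed

lemma diag_conj: "(diag_mat d ** M ** diag_mat d) $ i $ j = d i * M$i$j * d j"
  by (simp add: matrix_matrix_mult_def diag_mat_def if_distrib if_distribR sum.delta sum.delta'
      cong: if_cong)

lemma pm1_sq: "d = 1 \<or> d = -1 \<Longrightarrow> d * d = (1::real)"
  by auto

lemma sym_comp: "transpose S = S \<Longrightarrow> S$j$i = S$i$j"
  by (metis transpose_def vec_lambda_beta)

lemma psd_add:
  fixes A B :: "real^'n^'n"
  assumes "psd A" "transpose B = B" "\<And>x. 0 \<le> x \<bullet> (B *v x)"
  shows "psd (A + B)"
proof -
  have "transpose (A + B) = A + B"
    using assms by (simp add: psd_def symmetric_mat_def transpose_def vec_eq_iff)
  moreover have "0 \<le> x \<bullet> ((A + B) *v x)" for x
    using assms by (simp add: psd_def matrix_vector_mult_add_rdistrib inner_add_right add_nonneg_nonneg)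
  ultimately show ?thesis by (simp add: psd_def symmetric_mat_def)
qed

lemma term_le:
  fixes p q w x y :: real
  assumes d1: "p = 1 \<or> p = -1" and d2: "q = 1 \<or> q = -1" and w: "0 \<le> p * w * q"
  shows "(p * \<bar>x\<bar>) * (- w) * (q * \<bar>y\<bar>) \<le> x * (- w) * y"
proof -
  have a1: "\<bar>p\<bar> = 1" "\<bar>q\<bar> = 1" "p*p = 1" "q*q = 1" using d1 d2 by auto
  have s_eq: "w * x * y = (p*w*q) * ((p*x)*(q*y))"
  proof -
    have "(p*w*q) * ((p*x)*(q*y)) = (p*p)*(q*q)*(w*x*y)" by (simp add: algebra_simps)
    then show ?thesis using a1 by simp
  qed
  have "(p*x)*(q*y) \<le> \<bar>x\<bar>*\<bar>y\<bar>"
  proof -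
    have "(p*x)*(q*y) \<le> \<bar>(p*x)*(q*y)\<bar>" by simp
    also have "\<dots> = \<bar>x\<bar>*\<bar>y\<bar>" using a1 by (simp add: abs_mult)
    finally show ?thesis .
  qed
  then have "w * x * y \<le> (p*w*q) * (\<bar>x\<bar>*\<bar>y\<bar>)"
    unfolding s_eq using w by (rule mult_left_mono)
  moreover have "(p * \<bar>x\<bar>) * (- w) * (q * \<bar>y\<bar>) = - ((p*w*q) * (\<bar>x\<bar>*\<bar>y\<bar>))"
    by (simp add: algebra_simps)
  moreover have "x * (- w) * y = - (w*x*y)" by simp
  ultimately show ?thesis by linarith
qed

lemma kernel_zero:
  fixes S E Sh :: "real^'n^'n" and z :: "real^'n"
  assumes symS: "transpose S = S" and irr: "irreducible_mat S" and sn: "sign_nonneg S"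
    and feas: "S = E - Sh" "psd Sh" "diagonal_mat E"
    and kz: "Sh *v z = 0" and zk: "z$k = 0"
  shows "z = 0"
proof -
  obtain d where d: "\<And>i. d i = 1 \<or> d i = -1" and w: "\<And>i j. i \<noteq> j \<Longrightarrow> 0 \<le> d i * S$i$j * d j"
    using sn by (auto simp: sign_nonneg_def diag_conj)
  have dd: "d i * d i = 1" for i using d[of i] by auto
  have off: "Sh$i$j = - S$i$j" if "i \<noteq> j" for i j
  proof -
    have "Sh = E - S" using feas(1) by simp
    then show ?thesis using feas(3) that by (simp add: diagonal_mat_def)
  qed
  define u where "u = (\<chi> i. d i * \<bar>z$i\<bar>)"
  have Qz: "z \<bullet> (Sh *v z) = 0" using kz by simp
  have le: "u \<bullet> (Sh *v u) \<le> z \<bullet> (Sh *v z)"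
    unfolding qf_expand
  proof (intro sum_mono)
    fix i j
    show "u$i * Sh$i$j * u$j \<le> z$i * Sh$i$j * z$j"
    proof (cases "i = j")
      case True
      have "u$i * u$i = z$i * z$i" using dd[of i] by (simp add: u_def algebra_simps abs_mult_self_eq)
      note uu = \<open>u$i * u$i = z$i * z$i\<close>
      have "u$i * Sh$i$i * u$i = (u$i * u$i) * Sh$i$i" by (simp add: mult.commute mult.left_commute)
      also have "\<dots> = (z$i * z$i) * Sh$i$i" using uu by simp
      also have "\<dots> = z$i * Sh$i$i * z$i" by (simp add: mult.commute mult.left_commute)
      finally have eq: "u$i * Sh$i$i * u$i = z$i * Sh$i$i * z$i" .
      show ?thesis using eq unfolding True[symmetric] by (rule eq_refl)
    next
      case False
      show ?thesis using term_le[OF d[of i] d[of j] w[OF False], of "z$i" "z$j"] off[OF False]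
        by (simp add: u_def)
    qed
  qed
  have "0 \<le> u \<bullet> (Sh *v u)" using feas(2) by (simp add: psd_def)
  then have "u \<bullet> (Sh *v u) = 0" using le Qz by simp
  then have ku: "Sh *v u = 0" using psd_kernel feas(2) by blast
  define Z where "Z = {i. z$i = 0}"
  have clos: "j \<in> Z" if "i \<in> Z" "S$i$j \<noteq> 0" for i j
  proof (cases "j = i")
    case True then show ?thesis using that by simp
  next
    case False
    define f where "f l = d i * Sh$i$l * u$l" for l
    have "(Sh *v u)$i = 0" using ku by simp
    then have "(\<Sum>l\<in>UNIV. Sh$i$l * u$l) = 0" by (simp add: matrix_vector_mult_def)
    then have "d i * (\<Sum>l\<in>UNIV. Sh$i$l * u$l) = 0" by simp
    then have fs: "sum f UNIV = 0" by (simp add: f_def sum_distrib_left mult.assoc)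
    have fnp: "f l \<le> 0" for l
    proof (cases "l = i")
      case True then show ?thesis using that(1) by (simp add: f_def u_def Z_def)
    next
      case False
      have "f l = - ((d i * S$i$l * d l) * \<bar>z$l\<bar>)"
        using off[of i l] False by (simp add: f_def u_def algebra_simps)
      then show ?thesis using w[of i l] False by simp
    qed
    have "\<forall>l\<in>UNIV. (\<lambda>l. - f l) l = 0"
      using sum_nonneg_eq_0_iff[of UNIV "\<lambda>l. - f l"] fnp fs by (simp add: sum_negf)
    then have "f j = 0" by simp
    then have "(d i * S$i$j * d j) * \<bar>z$j\<bar> = 0"
      using off[of i j] False by (simp add: f_def u_def algebra_simps)
    moreover have "d i * S$i$j * d j \<noteq> 0" using that(2) d[of i] d[of j] by auto
    ultimately show ?thesis by (simp add: Z_def)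
  qed
  show "z = 0"
  proof (rule ccontr)
    assume "z \<noteq> 0"
    then obtain m where "z$m \<noteq> 0" by (metis vec_eq_iff zero_index)
    then have "Z \<noteq> {}" "Z \<noteq> UNIV" using zk by (auto simp: Z_def)
    then obtain i j where ij: "i \<in> Z" "j \<notin> Z" "\<not> (S$i$j = 0 \<and> S$j$i = 0)"
      using irr unfolding irreducible_mat_def by blast
    then have "S$i$j \<noteq> 0" using sym_comp[OF symS, of i j] by auto
    then have "j \<in> Z" by (rule clos[OF ij(1)])
    then show False using ij(2) by simp
  qed
qed

lemma lower_bound:
  fixes S E Sh :: "real^'n^'n"
  assumes symS: "transpose S = S" and irr: "irreducible_mat S" and sn: "sign_nonneg S"
    and feas: "S = E - Sh" "psd Sh" "diagonal_mat E"
  shows "CARD('n) - 1 \<le> rank Sh"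
proof (rule ccontr)
  assume "\<not> CARD('n) - 1 \<le> rank Sh"
  then have r: "dim (rows Sh) + 2 \<le> CARD('n)" by (simp add: row_rank_def)
  then have "dim (rows Sh) < DIM(real^'n)" by simp
  then obtain x where x0: "x \<noteq> 0" and xo: "\<And>v. v \<in> span (rows Sh) \<Longrightarrow> orthogonal x v"
    using orthogonal_to_subspace_exists by blast
  have "dim (insert x (rows Sh)) < DIM(real^'n)" using r dim_insert[of x "rows Sh"] by simp
  then obtain y where y0: "y \<noteq> 0" and yo: "\<And>v. v \<in> span (insert x (rows Sh)) \<Longrightarrow> orthogonal y v"
    using orthogonal_to_subspace_exists by blast
  have rowin: "Sh$i \<in> rows Sh" for i
    by (auto simp: rows_def row_def)
  have kx: "Sh *v x = 0"
  proof -
    have "(Sh *v x)$i = 0" for i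
    proof -
      have "orthogonal x (Sh$i)" using xo[of "Sh$i"] rowin[of i] by (simp add: span_base)
      then show ?thesis by (simp add: matrix_vector_mul_component orthogonal_def inner_commute)
    qed
    then show ?thesis by (simp add: vec_eq_iff)
  qed
  have ky: "Sh *v y = 0"
  proof -
    have "(Sh *v y)$i = 0" for i
    proof -
      have "Sh$i \<in> insert x (rows Sh)" using rowin[of i] by simp
      then have "orthogonal y (Sh$i)" using yo[of "Sh$i"] by (simp add: span_base)
      then show ?thesis by (simp add: matrix_vector_mul_component orthogonal_def inner_commute)
    qed
    then show ?thesis by (simp add: vec_eq_iff)
  qed
  have yx: "y \<bullet> x = 0" using yo[of x] by (simp add: span_base orthogonal_def)
  obtain k where xk: "x$k \<noteq> 0" using x0 by (metis vec_eq_iff zero_index)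
  define z where "z = (x$k) *\<^sub>R y - (y$k) *\<^sub>R x"
  have "Sh *v z = 0" using kx ky by (simp add: z_def matrix_vector_mult_diff_distrib matrix_vector_mult_scaleR)
  moreover have "z$k = 0" by (simp add: z_def)
  ultimately have z0: "z = 0" using kernel_zero[OF symS irr sn feas] by blast
  then have "z \<bullet> x = 0" by simp
  then have "y$k * (x \<bullet> x) = 0" using yx by (simp add: z_def inner_diff_left)
  then have "y$k = 0" using x0 by simp
  then have "x$k *\<^sub>R y = 0" using z0 by (simp add: z_def)
  then show False using xk y0 by simp
qed

lemma upper_exists:
  fixes S :: "real^'n^'n"
  assumes symS: "transpose S = S" and pd: "\<And>x. 0 \<le> x \<bullet> (S *v x)" and sn: "sign_nonneg S"
  shows "\<exists>Sh E. S = E - Sh \<and> psd Sh \<and> psd E \<and> diagonal_mat E \<and> rank Sh \<le> CARD('n) - 1"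
proof -
  obtain d where d: "\<And>i. d i = 1 \<or> d i = -1" and w: "\<And>i j. i \<noteq> j \<Longrightarrow> 0 \<le> d i * S$i$j * d j"
    using sn by (auto simp: sign_nonneg_def diag_conj)
  have dd: "d i * d i = 1" for i using d[of i] by auto
  have Ssym: "S$j$i = S$i$j" for i j using sym_comp[OF symS] .
  define W where "W i j = d i * d j * S$i$j" for i j
  have Wsym: "W i j = W j i" for i j by (simp add: W_def Ssym mult.commute mult.left_commute)
  have Wnn: "i \<noteq> j \<Longrightarrow> 0 \<le> W i j" for i j using w[of i j] by (simp add: W_def mult.commute mult.left_commute)
  define E where "E = diag_mat (\<lambda>i. \<Sum>j\<in>UNIV. W i j)"
  define Sh where "Sh = E - S"
  have Ediag: "diagonal_mat E" by (simp add: E_def diag_mat_def diagonal_mat_def)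
  have Etr: "transpose E = E" by (simp add: E_def diag_mat_def transpose_def vec_eq_iff)
  have Shtr: "transpose Sh = Sh"
    using Etr symS by (simp add: Sh_def transpose_def vec_eq_iff)
  define f where "f x i j = W i j * (x$i)^2 - S$i$j * x$i * x$j" for x :: "real^'n" and i j
  have qf: "x \<bullet> (Sh *v x) = (\<Sum>i\<in>UNIV. \<Sum>j\<in>UNIV. f x i j)" for x
  proof -
    have "x \<bullet> (Sh *v x) = (\<Sum>i\<in>UNIV. \<Sum>j\<in>UNIV. x$i * E$i$j * x$j) - (\<Sum>i\<in>UNIV. \<Sum>j\<in>UNIV. x$i * S$i$j * x$j)"
      unfolding qf_expand by (simp add: Sh_def algebra_simps sum_subtractf)
    also have "(\<Sum>i\<in>UNIV. \<Sum>j\<in>UNIV. x$i * E$i$j * x$j) = (\<Sum>i\<in>UNIV. \<Sum>j\<in>UNIV. W i j * (x$i)^2)"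
      by (simp add: E_def diag_mat_def if_distrib if_distribR sum.delta sum_distrib_left
          sum_distrib_right power2_eq_square algebra_simps cong: if_cong)
    finally show ?thesis by (simp add: f_def sum_subtractf algebra_simps)
  qed
  have fpair: "0 \<le> f x i j + f x j i" for x i j
  proof (cases "i = j")
    case True then show ?thesis by (simp add: f_def W_def dd power2_eq_square algebra_simps)
  next
    case False
    have e1: "(d i * x$i - d j * x$j)^2 = (d i*d i)*(x$i)^2 + (d j*d j)*(x$j)^2 - 2*(d i*d j)*(x$i*x$j)"
      by (simp add: power2_eq_square algebra_simps)
    have e2: "W i j * (d i * d j) = S$i$j"
    proof -
      have "W i j * (d i * d j) = (d i*d i)*(d j*d j)*S$i$j" by (simp add: W_def algebra_simps)
      then show ?thesis using dd by simp
    qed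
    have "W i j * (d i * x$i - d j * x$j)^2 = W i j * (x$i)^2 + W i j * (x$j)^2 - 2*(W i j * (d i * d j))*(x$i*x$j)"
      unfolding e1 using dd by (simp add: algebra_simps)
    also have "\<dots> = f x i j + f x j i"
      unfolding e2 f_def using Wsym[of j i] Ssym[of j i] by (simp add: algebra_simps)
    finally have "f x i j + f x j i = W i j * (d i * x$i - d j * x$j)^2" by simp
    then show ?thesis using Wnn[OF False] by simp
  qed
  have Shpsd: "psd Sh"
  proof -
    have "0 \<le> x \<bullet> (Sh *v x)" for x
    proof -
      have "2 * (x \<bullet> (Sh *v x)) = (\<Sum>i\<in>UNIV. \<Sum>j\<in>UNIV. f x i j) + (\<Sum>j\<in>UNIV. \<Sum>i\<in>UNIV. f x i j)"
        by (simp add: qf sum.swap[of "f x"])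
      also have "\<dots> = (\<Sum>i\<in>UNIV. \<Sum>j\<in>UNIV. f x i j + f x j i)"
        by (simp add: sum.distrib)
      also have "\<dots> \<ge> 0" by (intro sum_nonneg fpair)
      finally show ?thesis by simp
    qed
    then show ?thesis using Shtr by (simp add: psd_def symmetric_mat_def)
  qed
  have Epsd: "psd E"
  proof -
    have "E = Sh + S" by (simp add: Sh_def)
    then show ?thesis using psd_add[OF Shpsd symS pd] by simp
  qed
  define v where "v = (\<chi> i. d i)"
  have "Sh *v v = 0"
  proof -
    have "(Sh *v v)$i = 0" for i
    proof -
      have "(Sh *v v)$i = (\<Sum>j\<in>UNIV. E$i$j * d j) - (\<Sum>j\<in>UNIV. S$i$j * d j)"
        by (simp add: matrix_vector_mult_def Sh_def v_def algebra_simps sum_subtractf)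
      also have "(\<Sum>j\<in>UNIV. E$i$j * d j) = (\<Sum>j\<in>UNIV. W i j) * d i"
        by (simp add: E_def diag_mat_def if_distrib if_distribR sum.delta cong: if_cong)
      also have "\<dots> = (\<Sum>j\<in>UNIV. S$i$j * d j)"
        unfolding sum_distrib_right
      proof (rule sum.cong[OF refl])
        fix j
        have "W i j * d i = (d i * d i) * (S$i$j * d j)" by (simp add: W_def algebra_simps)
        then show "W i j * d i = S$i$j * d j" using dd by simp
      qed
      finally show ?thesis by simp
    qed
    then show ?thesis by (simp add: vec_eq_iff)
  qed
  moreover have "v \<noteq> 0"
  proof
    assume "v = 0"
    then have "d undefined = 0" by (metis v_def vec_lambda_beta zero_index)
    then show False using d[of undefined] by simp
  qed
  ultimately have "rank Sh \<noteq> CARD('n)" using matrix_nonfull_linear_equations_eq by blast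
  then have "rank Sh \<le> CARD('n) - 1" using rank_bound[of Sh] by simp
  moreover have "S = E - Sh" by (simp add: Sh_def)
  ultimately show ?thesis using Shpsd Epsd Ediag by blast
qed



definition bal :: "('n \<Rightarrow> 'n \<Rightarrow> real) \<Rightarrow> 'n set \<Rightarrow> bool" where
  "bal s V \<longleftrightarrow> (\<exists>d. (\<forall>i. d i = 1 \<or> d i = -1) \<and> (\<forall>i\<in>V. \<forall>j\<in>V. i \<noteq> j \<longrightarrow> 0 \<le> d i * d j * s i j))"

definition balw :: "('n \<Rightarrow> 'n \<Rightarrow> real) \<Rightarrow> 'n set \<Rightarrow> 'n \<Rightarrow> real" where
  "balw s V = (SOME d. (\<forall>i. d i = 1 \<or> d i = -1) \<and> (\<forall>i\<in>V. \<forall>j\<in>V. i \<noteq> j \<longrightarrow> 0 \<le> d i * d j * s i j))"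

lemma balw: "bal s V \<Longrightarrow> (\<forall>i. balw s V i = 1 \<or> balw s V i = -1) \<and>
    (\<forall>i\<in>V. \<forall>j\<in>V. i \<noteq> j \<longrightarrow> 0 \<le> balw s V i * balw s V j * s i j)"
  unfolding bal_def balw_def
  by (rule someI_ex[where P="\<lambda>d. (\<forall>i. d i = 1 \<or> d i = -1) \<and> (\<forall>i\<in>V. \<forall>j\<in>V. i \<noteq> j \<longrightarrow> 0 \<le> d i * d j * s i j)"])

lemma balw1: "bal s V \<Longrightarrow> balw s V i = 1 \<or> balw s V i = -1"
proof -
  assume "bal s V"
  then have "\<forall>i. balw s V i = 1 \<or> balw s V i = -1" by (rule balw[THEN conjunct1])
  then show ?thesis by (rule spec)
qed

lemma balw2: "bal s V \<Longrightarrow> i \<in> V \<Longrightarrow> j \<in> V \<Longrightarrow> i \<noteq> j \<Longrightarrow> 0 \<le> balw s V i * balw s V j * s i j"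
proof -
  assume a: "bal s V" "i \<in> V" "j \<in> V" "i \<noteq> j"
  from a(1) have "\<forall>i\<in>V. \<forall>j\<in>V. i \<noteq> j \<longrightarrow> 0 \<le> balw s V i * balw s V j * s i j" by (rule balw[THEN conjunct2])
  from this a(2) have "\<forall>j\<in>V. i \<noteq> j \<longrightarrow> 0 \<le> balw s V i * balw s V j * s i j" by (rule bspec)
  from this a(3) have "i \<noteq> j \<longrightarrow> 0 \<le> balw s V i * balw s V j * s i j" by (rule bspec)
  from this a(4) show ?thesis by (rule mp)
qed

lemma balI:
  assumes "\<And>i. d i = 1 \<or> d i = -1" "\<And>i j. i \<in> V \<Longrightarrow> j \<in> V \<Longrightarrow> i \<noteq> j \<Longrightarrow> 0 \<le> d i * d j * s i j"
  shows "bal s V"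
  unfolding bal_def
proof (rule exI[of _ d], rule conjI)
  show "\<forall>i. d i = 1 \<or> d i = -1" using assms(1) by (rule allI)
  show "\<forall>i\<in>V. \<forall>j\<in>V. i \<noteq> j \<longrightarrow> 0 \<le> d i * d j * s i j"
    using assms(2) by (intro ballI impI)
qed

lemma bal_empty: "bal s {}"
  by (rule balI[of "\<lambda>_. 1"]) auto

fun wprod :: "('n \<Rightarrow> 'n \<Rightarrow> real) \<Rightarrow> 'n list \<Rightarrow> real" where
  "wprod s [] = 1" | "wprod s [x] = 1" | "wprod s (x#y#ys) = s x y * wprod s (y#ys)"

definition walk :: "('n \<Rightarrow> 'n \<Rightarrow> real) \<Rightarrow> 'n set \<Rightarrow> 'n list \<Rightarrow> bool" where
  "walk s W xs \<longleftrightarrow> xs \<noteq> [] \<and> set xs \<subseteq> W \<and> successively (\<lambda>x y. x \<noteq> y \<and> s x y \<noteq> 0) xs"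

lemma walk_sign:
  assumes d: "\<And>i. d i = 1 \<or> d i = -1"
    and b: "\<And>i j. i \<in> W \<Longrightarrow> j \<in> W \<Longrightarrow> i \<noteq> j \<Longrightarrow> 0 \<le> d i * d j * s i j"
  shows "walk s W xs \<Longrightarrow> 0 < d (hd xs) * d (last xs) * wprod s xs"
proof (induction xs rule: induct_list012)
  case 1 then show ?case by (simp add: walk_def)
next
  case (2 x) then show ?case using d[of x] by auto
next
  case (3 x y zs)
  have wt: "walk s W (y#zs)" using 3(3) by (auto simp: walk_def)
  have ih: "0 < d y * d (last (y#zs)) * wprod s (y#zs)" using 3(2) wt by simp
  have xy: "x \<noteq> y" "s x y \<noteq> 0" "x \<in> W" "y \<in> W" using 3(3) by (auto simp: walk_def)
  have "0 \<le> d x * d y * s x y" using b xy by auto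
  moreover have "d x * d y * s x y \<noteq> 0" using xy d[of x] d[of y] by auto
  ultimately have p1: "0 < d x * d y * s x y" by (metis order_le_less)
  have dy: "d y * d y = 1" using d[of y] by auto
  have "0 < (d x * d y * s x y) * (d y * d (last (y#zs)) * wprod s (y#zs))"
    using p1 ih by simp
  also have "(d x * d y * s x y) * (d y * d (last (y#zs)) * wprod s (y#zs))
      = (d y * d y) * (d x * d (last (y#zs)) * (s x y * wprod s (y#zs)))"
    by (simp only: mult.assoc mult.commute mult.left_commute)
  also have "\<dots> = d x * d (last (y#zs)) * (s x y * wprod s (y#zs))"
    by (simp only: dy mult_1_left)
  finally show ?case by simp
qed

lemma walk_mono: "walk s W xs \<Longrightarrow> set xs \<subseteq> W' \<Longrightarrow> walk s W' xs"
  by (simp add: walk_def)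

lemma walk_snoc: "walk s W xs \<Longrightarrow> y \<in> W \<Longrightarrow> last xs \<noteq> y \<Longrightarrow> s (last xs) y \<noteq> 0 \<Longrightarrow> walk s W (xs @ [y])"
  by (auto simp: walk_def successively_append_iff)

lemma walk_split:
  assumes "walk s W (as @ z # bs)"
  shows "walk s W (z # bs)" "walk s W (as @ [z])"
  using assms by (auto simp: walk_def successively_append_iff)

lemma pm_prod3: "x = 1 \<or> x = -1 \<Longrightarrow> y = 1 \<or> y = -1 \<Longrightarrow> z = 1 \<or> z = (-1::real) \<Longrightarrow>
   (x*y*A)*(x*z*B)*(y*z*C) = A*B*C"
proof -
  assume a: "x = 1 \<or> x = -1" "y = 1 \<or> y = -1" "z = 1 \<or> z = (-1::real)"
  have sq: "x*x = 1" "y*y = 1" "z*z = 1" using a by auto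
  have "(x*y*A)*(x*z*B)*(y*z*C) = (x*x)*((y*y)*((z*z)*(A*B*C)))"
    by (simp only: mult.assoc mult.commute mult.left_commute)
  then show ?thesis by (simp only: sq mult_1_left)
qed

lemma pm_prod2: "y = 1 \<or> y = -1 \<Longrightarrow> z = 1 \<or> z = (-1::real) \<Longrightarrow>
   (y*A)*(z*B)*(y*z*C) = A*B*C"
proof -
  assume a: "y = 1 \<or> y = -1" "z = 1 \<or> z = (-1::real)"
  have sq: "y*y = 1" "z*z = 1" using a by auto
  have "(y*A)*(z*B)*(y*z*C) = (y*y)*((z*z)*(A*B*C))"
    by (simp only: mult.assoc mult.commute mult.left_commute)
  then show ?thesis by (simp only: sq mult_1_left)
qed

lemma structure_lemma:
  fixes s :: "'n \<Rightarrow> 'n \<Rightarrow> real"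
  assumes sym: "\<And>i j. s i j = s j i" and nb: "\<not> bal s V"
    and allb0: "\<forall>w\<in>V. bal s (V - {w})" and uV: "u \<in> V"
  shows "\<exists>p q. p \<in> V - {u} \<and> q \<in> V - {u} \<and> p \<noteq> q \<and> s p u \<noteq> 0 \<and> s q u \<noteq> 0 \<and>
     (\<forall>x\<in>V-{u}. x \<noteq> p \<longrightarrow> x \<noteq> q \<longrightarrow> s x u = 0) \<and>
     (s p q = 0 \<or> (V = {u,p,q} \<and> s u p * s u q * s p q < 0))"
proof -
  have allb: "bal s (V - {w})" if "w \<in> V" for w using allb0 that by (rule bspec)
  define d where "d = balw s (V - {u})"
  have d: "\<And>i. d i = 1 \<or> d i = -1" unfolding d_def by (rule balw1[OF allb[OF uV]])
  have db: "\<And>i j. i \<in> V - {u} \<Longrightarrow> j \<in> V - {u} \<Longrightarrow> i \<noteq> j \<Longrightarrow> 0 \<le> d i * d j * s i j"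
    unfolding d_def by (rule balw2[OF allb[OF uV]])
  define Np where "Np = {x\<in>V-{u}. 0 < d x * s x u}"
  define Nm where "Nm = {x\<in>V-{u}. d x * s x u < 0}"
  define P where "P xs \<longleftrightarrow> walk s (V-{u}) xs \<and> hd xs \<in> Np \<and> last xs \<in> Nm" for xs
  have exP: "\<exists>xs. P xs"
  proof (rule ccontr)
    assume nP: "\<not> (\<exists>xs. P xs)"
    define R where "R = {x. \<exists>xs. walk s (V-{u}) xs \<and> hd xs \<in> Np \<and> last xs = x}"
    have RV: "R \<subseteq> V - {u}"
    proof
      fix x assume "x \<in> R"
      then obtain xs where xs: "walk s (V-{u}) xs" "last xs = x" unfolding R_def by blast
      then have "xs \<noteq> []" by (simp add: walk_def)
      then have "last xs \<in> set xs" by (rule last_in_set)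
      then show "x \<in> V - {u}" using xs by (auto simp: walk_def)
    qed
    have Rcl: "y \<in> R" if xR: "x \<in> R" and yV: "y \<in> V - {u}" and xy: "x \<noteq> y" and sxy: "s x y \<noteq> 0" for x y
    proof -
      obtain xs where xs: "walk s (V-{u}) xs" "hd xs \<in> Np" "last xs = x" using xR unfolding R_def by blast
      have "walk s (V-{u}) (xs @ [y])" using walk_snoc[OF xs(1) yV] xs(3) xy sxy by simp
      moreover have "hd (xs @ [y]) = hd xs" using xs(1) by (simp add: walk_def)
      moreover have "last (xs @ [y]) = y" by simp
      ultimately show ?thesis using xs(2) unfolding R_def by (metis (mono_tags, lifting) mem_Collect_eq)
    qed
    have NpR: "x \<in> R" if "x \<in> Np" for x
    proof -
      have "walk s (V-{u}) [x]" using that by (simp add: walk_def Np_def)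
      then show ?thesis using that unfolding R_def by (intro CollectI exI[of _ "[x]"]) simp
    qed
    have NmR: "x \<notin> R" if "x \<in> Nm" for x
      using nP that unfolding R_def P_def by blast
    define d' where "d' x = (if x = u then -1 else if x \<in> R then - d x else d x)" for x
    have d': "d' i = 1 \<or> d' i = -1" for i using d[of i] by (auto simp: d'_def)
    have side: "0 \<le> d' u * d' j * s u j" if "j \<in> V - {u}" for j
    proof (cases "j \<in> R")
      case True
      then have "j \<notin> Nm" using NmR by blast
      then have "0 \<le> d j * s j u" using that by (auto simp: Nm_def)
      then show ?thesis using True that sym[of u j] by (auto simp: d'_def)
    next
      case False
      then have "j \<notin> Np" using NpR by blast
      then have "d j * s j u \<le> 0" using that by (auto simp: Np_def)
      then show ?thesis using False that sym[of u j] by (auto simp: d'_def)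
    qed
    have "bal s V"
    proof (rule balI[of d'])
      fix i show "d' i = 1 \<or> d' i = -1" by (rule d')
    next
      fix i j assume ij: "i \<in> V" "j \<in> V" "i \<noteq> j"
      show "0 \<le> d' i * d' j * s i j"
      proof (cases "i = u")
        case True then show ?thesis using side[of j] ij by auto
      next
        case iu: False
        show ?thesis
        proof (cases "j = u")
          case True
          then have "0 \<le> d' u * d' i * s u i" using side[of i] ij iu by auto
          then show ?thesis using True sym[of i j] by (simp add: algebra_simps)
        next
          case ju: False
          have iV: "i \<in> V - {u}" and jV: "j \<in> V - {u}" using ij iu ju by auto
          show ?thesis
          proof (cases "s i j = 0")
            case True then show ?thesis by simp
          next
            case False
            have r1: "i \<in> R \<Longrightarrow> j \<in> R" using Rcl[OF _ jV ij(3) False] by blast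
            have "s j i \<noteq> 0" "j \<noteq> i" using False sym[of i j] ij(3) by auto
            then have r2: "j \<in> R \<Longrightarrow> i \<in> R" using Rcl[OF _ iV] by blast
            have "i \<in> R \<longleftrightarrow> j \<in> R" using r1 r2 by blast
            then have "d' i * d' j = d i * d j" using iu ju by (auto simp: d'_def)
            then show ?thesis using db[OF iV jV ij(3)] by simp
          qed
        qed
      qed
    qed
    then show False using nb by simp
  qed
  obtain xs0 where "P xs0" using exP by blast
  then obtain xs where Pxs: "P xs" and mini: "\<And>ys. P ys \<Longrightarrow> length xs \<le> length ys"
    using ex_has_least_nat[of P xs0 length] by blast
  define p where "p = hd xs"
  define q where "q = last xs"
  have wxs: "walk s (V-{u}) xs" and pNp: "p \<in> Np" and qNm: "q \<in> Nm"
    using Pxs by (auto simp: P_def p_def q_def)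
  have pq: "p \<noteq> q" using pNp qNm by (auto simp: Np_def Nm_def)
  have pV: "p \<in> V - {u}" and qV: "q \<in> V - {u}" using pNp qNm by (auto simp: Np_def Nm_def)
  have spu: "s p u \<noteq> 0" and squ: "s q u \<noteq> 0" using pNp qNm by (auto simp: Np_def Nm_def)
  have xsne: "xs \<noteq> []" using wxs by (simp add: walk_def)
  have intp: "z = p" if zin: "z \<in> set xs" and zN: "z \<in> Np" for z
  proof -
    obtain as bs where xs: "xs = as @ z # bs" using split_list[OF zin] by blast
    have "P (z # bs)"
      using walk_split(1)[of s "V-{u}" as z bs] wxs xs zN Pxs by (auto simp: P_def)
    then have "length xs \<le> length (z # bs)" by (rule mini)
    then have "as = []" using xs by simp
    then show ?thesis using xs by (simp add: p_def)
  qed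
  have intq: "z = q" if zin: "z \<in> set xs" and zN: "z \<in> Nm" for z
  proof -
    obtain as bs where xs: "xs = as @ z # bs" using split_list[OF zin] by blast
    have "hd (as @ [z]) = hd xs" using xs by (cases as) auto
    then have "P (as @ [z])"
      using walk_split(2)[of s "V-{u}" as z bs] wxs xs zN Pxs by (auto simp: P_def)
    then have "length xs \<le> length (as @ [z])" by (rule mini)
    then have "bs = []" using xs by simp
    then show ?thesis using xs by (simp add: q_def)
  qed
  have dpq: "0 < d p * d q * wprod s xs"
    unfolding p_def q_def by (rule walk_sign[OF d db wxs])
  have Vxs: "V = insert u (set xs)"
  proof
    show "insert u (set xs) \<subseteq> V" using uV wxs by (auto simp: walk_def)
  next
    show "V \<subseteq> insert u (set xs)"
    proof
      fix w assume wV: "w \<in> V"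
      show "w \<in> insert u (set xs)"
      proof (rule ccontr)
        assume wn: "w \<notin> insert u (set xs)"
        define e where "e = balw s (V - {w})"
        have e: "\<And>i. e i = 1 \<or> e i = -1" unfolding e_def by (rule balw1[OF allb[OF wV]])
        have eb: "\<And>i j. i \<in> V - {w} \<Longrightarrow> j \<in> V - {w} \<Longrightarrow> i \<noteq> j \<Longrightarrow> 0 \<le> e i * e j * s i j"
          unfolding e_def by (rule balw2[OF allb[OF wV]])
        have wxs': "walk s (V - {w}) xs" using wxs wn by (auto simp: walk_def)
        have e1: "0 < e p * e q * wprod s xs"
          unfolding p_def q_def by (rule walk_sign[OF e eb wxs'])
        have "p \<in> set xs" "q \<in> set xs" using xsne by (auto simp: p_def q_def)
        then have pw: "p \<in> V - {w}" and qw: "q \<in> V - {w}" and uw: "u \<in> V - {w}"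
          using pV qV wn uV by auto
        have e2: "0 \<le> e u * e p * s u p" using eb[OF uw pw] pV by auto
        have e3: "0 \<le> e u * e q * s u q" using eb[OF uw qw] qV by auto
        have "0 \<le> (e u * e p * s u p) * (e u * e q * s u q) * (e p * e q * wprod s xs)"
          using e1 e2 e3 by simp
        then have A: "0 \<le> s u p * s u q * wprod s xs"
          using pm_prod3[OF e[of u] e[of p] e[of q]] by simp
        have f1: "0 < d p * s u p" and f2: "d q * s u q < 0"
          using pNp qNm sym[of p u] sym[of q u] by (auto simp: Np_def Nm_def)
        have "(d p * s u p) * (d q * s u q) * (d p * d q * wprod s xs) < 0"
          using f1 f2 dpq by (simp add: mult_pos_neg mult_neg_pos mult_pos_pos)
        then have "s u p * s u q * wprod s xs < 0"
          using pm_prod2[OF d[of p] d[of q]] by simp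
        then show False using A by simp
      qed
    qed
  qed
  have nbr: "\<forall>x\<in>V-{u}. x \<noteq> p \<longrightarrow> x \<noteq> q \<longrightarrow> s x u = 0"
  proof (intro ballI impI)
    fix x assume x: "x \<in> V - {u}" "x \<noteq> p" "x \<noteq> q"
    show "s x u = 0"
    proof (rule ccontr)
      assume "s x u \<noteq> 0"
      then have "d x * s x u \<noteq> 0" using d[of x] by auto
      then have "d x * s x u < 0 \<or> 0 < d x * s x u" by (metis linorder_neqE_linordered_idom)
      then have "x \<in> Np \<or> x \<in> Nm" using x(1) unfolding Np_def Nm_def by blast
      moreover have "x \<in> set xs" using x(1) Vxs by auto
      ultimately show False using intp intq x by blast
    qed
  qed
  have last3: "s p q = 0 \<or> (V = {u,p,q} \<and> s u p * s u q * s p q < 0)"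
  proof (cases "s p q = 0")
    case True then show ?thesis by simp
  next
    case False
    have "P [p,q]" using pNp qNm pV qV pq False by (simp add: P_def walk_def)
    then have l2: "length xs \<le> 2" using mini by fastforce
    have "length xs \<noteq> 1"
    proof
      assume "length xs = 1"
      then obtain a where "xs = [a]" by (metis One_nat_def length_0_conv length_Suc_conv)
      then show False using pq by (simp add: p_def q_def)
    qed
    moreover have "length xs \<noteq> 0" using xsne by simp
    ultimately have "length xs = 2" using l2 by linarith
    then obtain a b where "xs = [a, b]"
      by (metis One_nat_def Suc_1 length_0_conv length_Suc_conv)
    then have xs2: "xs = [p, q]" by (simp add: p_def q_def)
    have V3: "V = {u,p,q}" using Vxs xs2 by auto
    have f1: "0 < d p * s u p" and f2: "d q * s u q < 0"
      using pNp qNm sym[of p u] sym[of q u] by (auto simp: Np_def Nm_def)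
    have f3: "0 < d p * d q * s p q" using dpq xs2 by simp
    have "(d p * s u p) * (d q * s u q) * (d p * d q * s p q) < 0"
      using f1 f2 f3 by (simp add: mult_pos_neg mult_neg_pos mult_pos_pos)
    then have "s u p * s u q * s p q < 0"
      using pm_prod2[OF d[of p] d[of q]] by simp
    then show ?thesis using V3 by simp
  qed
  show ?thesis using pV qV pq spu squ nbr last3 by blast
qed


lemma small_t:
  fixes s :: "'n::finite \<Rightarrow> 'n \<Rightarrow> real"
  assumes nb: "\<not> bal s W"
  shows "\<exists>t>0. \<not> bal (\<lambda>i j. s i j + t * s i u * s j u) W"
proof -
  have "\<exists>i j. s i j \<noteq> 0"
  proof (rule ccontr)
    assume "\<not> (\<exists>i j. s i j \<noteq> 0)"
    then have "bal s W" by (intro balI[of "\<lambda>_. 1"]) auto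
    then show False using nb by simp
  qed
  then obtain i0 j0 where ij0: "s i0 j0 \<noteq> 0" by blast
  define A where "A = (\<lambda>(i,j). \<bar>s i j\<bar>) ` {(i,j). s i j \<noteq> 0}"
  have finA: "finite A" by (simp add: A_def)
  have neA: "A \<noteq> {}" using ij0 by (auto simp: A_def)
  define m where "m = Min A"
  have mpos: "0 < m" using Min_in[OF finA neA] by (auto simp: m_def A_def)
  have mle: "m \<le> \<bar>s i j\<bar>" if "s i j \<noteq> 0" for i j
    unfolding m_def by (rule Min_le[OF finA]) (use that in \<open>auto simp: A_def\<close>)
  define M where "M = 1 + (\<Sum>i\<in>UNIV. \<Sum>j\<in>UNIV. \<bar>s i u * s j u\<bar>)"
  have Mle: "\<bar>s i u * s j u\<bar> < M" for i j
  proof -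
    have "\<bar>s i u * s j u\<bar> \<le> (\<Sum>j\<in>UNIV. \<bar>s i u * s j u\<bar>)"
      by (rule member_le_sum) auto
    also have "\<dots> \<le> (\<Sum>i\<in>UNIV. \<Sum>j\<in>UNIV. \<bar>s i u * s j u\<bar>)"
      by (rule member_le_sum[of _ UNIV "\<lambda>i. \<Sum>j\<in>UNIV. \<bar>s i u * s j u\<bar>"]) (auto intro: sum_nonneg)
    finally show ?thesis by (simp add: M_def)
  qed
  have Mpos: "0 < M" using Mle[of i0 i0] by linarith
  define t where "t = m / (2 * M)"
  have tpos: "0 < t" using mpos Mpos by (simp add: t_def)
  have small: "\<bar>t * s i u * s j u\<bar> < \<bar>s i j\<bar>" if "s i j \<noteq> 0" for i j
  proof -
    have "\<bar>t * s i u * s j u\<bar> = t * \<bar>s i u * s j u\<bar>" using tpos by (simp add: abs_mult)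
    also have "\<dots> \<le> t * M" using Mle[of i j] tpos by simp
    also have "t * M = m / 2" using Mpos by (simp add: t_def)
    also have "\<dots> < m" using mpos by simp
    also have "\<dots> \<le> \<bar>s i j\<bar>" using mle[OF that] .
    finally show ?thesis .
  qed
  have same: "0 < (s i j + t * s i u * s j u) * s i j" if "s i j \<noteq> 0" for i j
  proof -
    define e where "e = t * s i u * s j u"
    have h: "\<bar>e\<bar> < \<bar>s i j\<bar>" using small[OF that] by (simp add: e_def)
    have "\<bar>e * s i j\<bar> = \<bar>e\<bar> * \<bar>s i j\<bar>" by (rule abs_mult)
    also have "\<dots> < \<bar>s i j\<bar> * \<bar>s i j\<bar>" using h that by (intro mult_strict_right_mono) auto
    also have "\<dots> = s i j * s i j" by (rule abs_mult_self_eq)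
    finally have "\<bar>e * s i j\<bar> < s i j * s i j" .
    then have "- (s i j * s i j) < e * s i j" by linarith
    then show ?thesis by (simp add: e_def algebra_simps)
  qed
  show ?thesis
  proof (intro exI[of _ t] conjI tpos notI)
    assume B: "bal (\<lambda>i j. s i j + t * s i u * s j u) W"
    define d where "d = balw (\<lambda>i j. s i j + t * s i u * s j u) W"
    have d: "\<And>i. d i = 1 \<or> d i = -1" unfolding d_def by (rule balw1[OF B])
    have db: "\<And>i j. i \<in> W \<Longrightarrow> j \<in> W \<Longrightarrow> i \<noteq> j \<Longrightarrow> 0 \<le> d i * d j * (s i j + t * s i u * s j u)"
      unfolding d_def by (rule balw2[OF B])
    have "bal s W"
    proof (rule balI[of d])
      fix i show "d i = 1 \<or> d i = -1" by (rule d)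
    next
      fix i j assume ij: "i \<in> W" "j \<in> W" "i \<noteq> j"
      show "0 \<le> d i * d j * s i j"
      proof (cases "s i j = 0")
        case True then show ?thesis by simp
      next
        case False
        have h1: "0 \<le> d i * d j * (s i j + t * s i u * s j u)" by (rule db[OF ij])
        have h2: "0 < (s i j + t * s i u * s j u) * s i j" by (rule same[OF False])
        have k: "d i * d j = 1 \<or> d i * d j = -1" using d[of i] d[of j] by auto
        show ?thesis using k h1 h2
          by (elim disjE) (auto simp: zero_less_mult_iff zero_le_mult_iff)
      qed
    qed
    then show False using nb by simp
  qed
qed

lemma prod_pos_imp: "0 \<le> a*b \<Longrightarrow> 0 < a \<Longrightarrow> 0 \<le> (b::real)"
  by (simp add: zero_le_mult_iff)

lemma prod_neg_imp: "0 \<le> a*b \<Longrightarrow> a < 0 \<Longrightarrow> b \<le> (0::real)"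
  by (simp add: zero_le_mult_iff)

lemma deg2:
  fixes s :: "'n \<Rightarrow> 'n \<Rightarrow> real"
  assumes sym: "\<And>i j. s i j = s j i" and uV: "u \<in> V" and pV: "p \<in> V - {u}" and qV: "q \<in> V - {u}"
    and pq: "p \<noteq> q" and spu: "s p u \<noteq> 0" and squ: "s q u \<noteq> 0"
    and nbr: "\<forall>x\<in>V-{u}. x \<noteq> p \<longrightarrow> x \<noteq> q \<longrightarrow> s x u = 0" and spq: "s p q = 0"
    and nb: "\<not> bal s V"
  shows "\<not> bal (\<lambda>i j. s i j + 1 * s i u * s j u) (V - {u})"
proof
  assume B: "bal (\<lambda>i j. s i j + 1 * s i u * s j u) (V - {u})"
  define d where "d = balw (\<lambda>i j. s i j + 1 * s i u * s j u) (V - {u})"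
  have d: "\<And>i. d i = 1 \<or> d i = -1" unfolding d_def by (rule balw1[OF B])
  have db: "\<And>i j. i \<in> V - {u} \<Longrightarrow> j \<in> V - {u} \<Longrightarrow> i \<noteq> j \<Longrightarrow> 0 \<le> d i * d j * (s i j + 1 * s i u * s j u)"
    unfolding d_def by (rule balw2[OF B])
  have dV: "0 \<le> d i * d j * s i j" if ij: "i \<in> V - {u}" "j \<in> V - {u}" "i \<noteq> j" for i j
  proof (cases "(i = p \<and> j = q) \<or> (i = q \<and> j = p)")
    case True then show ?thesis using spq sym[of p q] by auto
  next
    case False
    have "s i u = 0 \<or> s j u = 0"
    proof (cases "i = p \<or> i = q")
      case True
      then have "j \<noteq> p" "j \<noteq> q" using False ij(3) by auto
      then show ?thesis using nbr ij(2) by blast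
    next
      case False
      then show ?thesis using nbr ij(1) by blast
    qed
    then have eq: "s i j + 1 * s i u * s j u = s i j" by auto
    show ?thesis using db[OF ij] eq by metis
  qed
  have dpq: "0 \<le> (d p * s p u) * (d q * s q u)"
  proof -
    have "0 \<le> d p * d q * (s p q + 1 * s p u * s q u)" using db[OF pV qV pq] .
    then show ?thesis using spq by (simp add: algebra_simps)
  qed
  have dp0: "d p * s p u \<noteq> 0" using d[of p] spu by auto
  define e where "e = d(u := (if 0 \<le> d p * s p u then 1 else -1))"
  have e: "e i = 1 \<or> e i = -1" for i using d[of i] by (auto simp: e_def)
  have side: "0 \<le> e u * e x * s x u" if "x \<in> V - {u}" for x
  proof -
    have ex: "e x = d x" using that by (auto simp: e_def)
    show ?thesis
    proof (cases "x = p")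
      case True then show ?thesis using ex by (auto simp: e_def)
    next
      case xp: False
      show ?thesis
      proof (cases "x = q")
        case True
        show ?thesis
        proof (cases "0 \<le> d p * s p u")
          case True2: True
          then have "0 < d p * s p u" using dp0 by (metis order_le_less)
          then have "0 \<le> d q * s q u" using prod_pos_imp[OF dpq] by blast
          then show ?thesis using True True2 ex by (simp add: e_def)
        next
          case False2: False
          then have "d p * s p u < 0" by simp
          then have "d q * s q u \<le> 0" using prod_neg_imp[OF dpq] by blast
          then show ?thesis using True False2 ex by (simp add: e_def)
        qed
      next
        case False
        then show ?thesis using nbr that xp by simp
      qed
    qed
  qed
  have "bal s V"
  proof (rule balI[of e])
    fix i show "e i = 1 \<or> e i = -1" by (rule e)
  next
    fix i j assume ij: "i \<in> V" "j \<in> V" "i \<noteq> j"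
    show "0 \<le> e i * e j * s i j"
    proof (cases "i = u")
      case True then show ?thesis using side[of j] ij sym[of u j] by (simp add: algebra_simps)
    next
      case iu: False
      show ?thesis
      proof (cases "j = u")
        case True then show ?thesis using side[of i] ij iu by (simp add: algebra_simps)
      next
        case False
        then show ?thesis using dV[of i j] ij iu by (simp add: e_def)
      qed
    qed
  qed
  then show False using nb by simp
qed


lemma extend:
  fixes s :: "'n::finite \<Rightarrow> 'n \<Rightarrow> real" and g' :: "'n \<Rightarrow> real^'n"
  assumes uV: "u \<in> V" and t: "0 < t" and sym: "\<And>i j. s i j = s j i"
    and g': "\<And>i j. i \<in> V - {u} \<Longrightarrow> j \<in> V - {u} \<Longrightarrow> i \<noteq> j \<Longrightarrow> g' i \<bullet> g' j = -(s i j + t * s i u * s j u)"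
    and dg: "dim (g' ` (V - {u})) + 2 \<le> card (V - {u})"
  shows "\<exists>g::'n \<Rightarrow> real^'n. (\<forall>i\<in>V. \<forall>j\<in>V. i \<noteq> j \<longrightarrow> g i \<bullet> g j = - s i j) \<and> dim (g ` V) + 2 \<le> card V"
proof -
  have "card (V - {u}) \<le> CARD('n)" by (rule card_mono) auto
  then have "dim (g' ` (V - {u})) < DIM(real^'n)" using dg by simp
  then obtain x where x0: "x \<noteq> 0" and xo: "\<And>y. y \<in> span (g' ` (V - {u})) \<Longrightarrow> orthogonal x y"
    using orthogonal_to_subspace_exists by blast
  define e where "e = sgn x"
  have ne: "norm e = 1" using x0 by (simp add: e_def norm_sgn)
  have ee: "e \<bullet> e = 1" using ne by (metis power2_norm_eq_inner power_one)
  have eo: "e \<bullet> g' i = 0" if "i \<in> V - {u}" for i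
  proof -
    have "orthogonal x (g' i)" using xo[of "g' i"] that by (simp add: span_base)
    then have "x \<bullet> g' i = 0" by (simp add: orthogonal_def)
    then show ?thesis by (simp add: e_def sgn_div_norm)
  qed
  have eo': "g' i \<bullet> e = 0" if "i \<in> V - {u}" for i using eo[OF that] by (simp add: inner_commute)
  define c where "c = sqrt t"
  have c0: "0 < c" and cc: "c * c = t" using t by (auto simp: c_def)
  define g where "g i = (if i = u then (1/c) *\<^sub>R e else g' i + (- s u i * c) *\<^sub>R e)" for i
  have gu: "g u \<bullet> g j = - s u j" if "j \<in> V - {u}" for j
  proof -
    have "g u \<bullet> g j = ((1/c) *\<^sub>R e) \<bullet> (g' j + (- s u j * c) *\<^sub>R e)"
      using that by (simp add: g_def)
    also have "\<dots> = (1/c) * (e \<bullet> g' j + (- s u j * c) * (e \<bullet> e))"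
      by (simp only: inner_add_right inner_scaleR_left inner_scaleR_right) (simp add: algebra_simps)
    also have "\<dots> = (1/c) * (- s u j * c)" using eo[OF that] ee by simp
    also have "\<dots> = - s u j" using c0 by simp
    finally show ?thesis .
  qed
  have gij: "g i \<bullet> g j = - s i j" if "i \<in> V - {u}" "j \<in> V - {u}" "i \<noteq> j" for i j
  proof -
    have "g i \<bullet> g j = g' i \<bullet> g' j + (- s u j * c) * (g' i \<bullet> e) + (- s u i * c) * (e \<bullet> g' j)
        + (- s u i * c) * (- s u j * c) * (e \<bullet> e)"
      using that by (simp add: g_def inner_add_right inner_add_left algebra_simps)
    also have "\<dots> = -(s i j + t * s i u * s j u) + (s u i * s u j) * (c * c)"
      using g'[OF that] eo'[OF that(1)] eo[OF that(2)] ee by (simp add: algebra_simps)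
    also have "\<dots> = - s i j" using cc sym[of u i] sym[of u j] by (simp add: algebra_simps)
    finally show ?thesis .
  qed
  have main: "\<forall>i\<in>V. \<forall>j\<in>V. i \<noteq> j \<longrightarrow> g i \<bullet> g j = - s i j"
  proof (intro ballI impI)
    fix i j assume ij: "i \<in> V" "j \<in> V" "i \<noteq> j"
    show "g i \<bullet> g j = - s i j"
    proof (cases "i = u")
      case True then show ?thesis using gu[of j] ij by simp
    next
      case iu: False
      show ?thesis
      proof (cases "j = u")
        case True
        then have "g i \<bullet> g j = g u \<bullet> g i" by (simp add: inner_commute)
        also have "\<dots> = - s u i" using gu[of i] ij iu by simp
        finally show ?thesis using True sym[of u i] by simp
      next
        case False
        then show ?thesis using gij ij iu by simp
      qed
    qed
  qed
  have sub: "g ` V \<subseteq> span (insert e (g' ` (V - {u})))"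
  proof
    fix y assume "y \<in> g ` V"
    then obtain i where i: "i \<in> V" "y = g i" by blast
    have eS: "e \<in> span (insert e (g' ` (V - {u})))" by (simp add: span_base)
    show "y \<in> span (insert e (g' ` (V - {u})))"
    proof (cases "i = u")
      case True then show ?thesis using i eS by (simp add: g_def span_scale)
    next
      case False
      then have "g' i \<in> span (insert e (g' ` (V - {u})))" using i by (simp add: span_base)
      then show ?thesis using i False eS by (auto simp: g_def intro!: span_diff span_scale)
    qed
  qed
  have "dim (g ` V) \<le> dim (insert e (g' ` (V - {u})))"
    using dim_subset[OF sub] by simp
  also have "\<dots> \<le> dim (g' ` (V - {u})) + 1" by (simp add: dim_insert)
  finally have "dim (g ` V) + 2 \<le> card (V - {u}) + 1" using dg by simp
  also have "card (V - {u}) + 1 = card V" using uV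
    by (simp add: card_Diff_singleton) (metis card_0_eq empty_iff finite Suc_pred neq0_conv Suc_eq_plus1)
  finally show ?thesis using main by blast
qed

lemma triangle:
  fixes s :: "'n::finite \<Rightarrow> 'n \<Rightarrow> real"
  assumes sym: "\<And>i j. s i j = s j i" and V: "V = {u,p,q}" and dist: "u \<noteq> p" "u \<noteq> q" "p \<noteq> q"
    and neg: "s u p * s u q * s p q < 0"
  shows "\<exists>g::'n \<Rightarrow> real^'n. (\<forall>i\<in>V. \<forall>j\<in>V. i \<noteq> j \<longrightarrow> g i \<bullet> g j = - s i j) \<and> dim (g ` V) + 2 \<le> card V"
proof -
  have nz: "s u p \<noteq> 0" "s u q \<noteq> 0" "s p q \<noteq> 0" using neg by auto
  define R where "R = - (s u p * s u q) / s p q"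
  have "R * (s p q * s p q) = - (s u p * s u q * s p q)" using nz by (simp add: R_def field_simps)
  moreover have "0 < s p q * s p q" using nz(3) by (metis linorder_neqE_linordered_idom mult_neg_neg mult_pos_pos)
  moreover have "0 < - (s u p * s u q * s p q)" using neg by simp
  ultimately have Rpos: "0 < R" by (metis zero_less_mult_iff not_less_iff_gr_or_eq)
  define ru where "ru = sqrt R"
  have ru0: "0 < ru" and rr: "ru * ru = R" using Rpos by (auto simp: ru_def)
  have k1: "ru * (- s u p / ru) = - s u p" using ru0 by simp
  have k2: "ru * (- s u q / ru) = - s u q" using ru0 by simp
  have k3: "(- s u p / ru) * (- s u q / ru) = - s p q"
  proof -
    have "(- s u p / ru) * (- s u q / ru) = (s u p * s u q) / R" using rr by (simp add: field_simps)
    also have "\<dots> = - s p q" using nz Rpos by (simp add: R_def field_simps)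
    finally show ?thesis .
  qed
  define r where "r x = (if x = u then ru else if x = p then - s u p / ru else - s u q / ru)" for x
  define e :: "real^'n" where "e = axis undefined 1"
  have ee: "e \<bullet> e = 1" by (simp add: e_def inner_axis_axis)
  define g where "g x = r x *\<^sub>R e" for x
  have main: "\<forall>i\<in>V. \<forall>j\<in>V. i \<noteq> j \<longrightarrow> g i \<bullet> g j = - s i j"
  proof (intro ballI impI)
    fix i j assume ij: "i \<in> V" "j \<in> V" "i \<noteq> j"
    have "g i \<bullet> g j = r i * r j" using ee by (simp add: g_def)
    also have "r i * r j = - s i j"
      using ij k1 k2 k3 dist sym[of u p] sym[of u q] sym[of p q] unfolding V
      by (auto simp: r_def mult.commute)
    finally show "g i \<bullet> g j = - s i j" .
  qed
  have "g ` V \<subseteq> span {e}" by (auto simp: g_def span_scale span_base)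
  then have "dim (g ` V) \<le> card {e}" by (rule dim_le_card) simp
  moreover have "card V = 3" using dist by (simp add: V)
  ultimately show ?thesis using main by auto
qed

lemma gram_main:
  fixes s :: "'n::finite \<Rightarrow> 'n \<Rightarrow> real"
  shows "(\<And>i j. s i j = s j i) \<Longrightarrow> \<not> bal s V \<Longrightarrow>
    \<exists>g::'n \<Rightarrow> real^'n. (\<forall>i\<in>V. \<forall>j\<in>V. i \<noteq> j \<longrightarrow> g i \<bullet> g j = - s i j) \<and> dim (g ` V) + 2 \<le> card V"
proof (induction "card V" arbitrary: V s rule: less_induct)
  case less
  note sym = less.prems(1) and nb = less.prems(2)
  have step: "\<exists>g::'n \<Rightarrow> real^'n. (\<forall>i\<in>V. \<forall>j\<in>V. i \<noteq> j \<longrightarrow> g i \<bullet> g j = - s i j) \<and> dim (g ` V) + 2 \<le> card V"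
    if uV: "u \<in> V" and t: "0 < t" and nbt: "\<not> bal (\<lambda>i j. s i j + t * s i u * s j u) (V - {u})" for u t
  proof -
    define s' where "s' = (\<lambda>i j. s i j + t * s i u * s j u)"
    have symt: "\<And>i j. s' i j = s' j i"
      using sym by (simp add: s'_def algebra_simps)
    have nbt': "\<not> bal s' (V - {u})" unfolding s'_def by (rule nbt)
    have "card (V - {u}) < card V" by (rule card_Diff1_less[OF finite[of V] uV])
    from less.hyps[OF this symt nbt'] show ?thesis
    proof (elim exE conjE)
      fix g' :: "'n \<Rightarrow> real^'n"
      assume g0: "\<forall>i\<in>V-{u}. \<forall>j\<in>V-{u}. i \<noteq> j \<longrightarrow> g' i \<bullet> g' j = - s' i j"
        and dg: "dim (g' ` (V-{u})) + 2 \<le> card (V-{u})"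
      have g': "\<forall>i\<in>V-{u}. \<forall>j\<in>V-{u}. i \<noteq> j \<longrightarrow> g' i \<bullet> g' j = - (s i j + t * s i u * s j u)"
        using g0 by (simp only: s'_def)
      show ?thesis
      proof (rule extend[OF uV t sym])
        fix i j assume ij: "i \<in> V - {u}" "j \<in> V - {u}" "i \<noteq> j"
        show "g' i \<bullet> g' j = - (s i j + t * s i u * s j u)"
          using g' ij by simp
      next
        show "dim (g' ` (V - {u})) + 2 \<le> card (V - {u})" by (rule dg)
      qed
    qed
  qed
  show ?case
  proof (cases "\<exists>u\<in>V. \<not> bal s (V - {u})")
    case True
    then obtain u where uV: "u \<in> V" and nb': "\<not> bal s (V - {u})" by blast
    from small_t[OF nb', of u] show ?thesis
    proof (elim exE conjE)
      fix t assume "0 < t" "\<not> bal (\<lambda>i j. s i j + t * s i u * s j u) (V - {u})"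
      then show ?thesis by (rule step[OF uV])
    qed
  next
    case False
    then have allb: "\<forall>w\<in>V. bal s (V - {w})" by simp
    have "V \<noteq> {}"
    proof
      assume "V = {}"
      then show False using nb bal_empty[of s] by simp
    qed
    then obtain u where uV: "u \<in> V" by blast
    from structure_lemma[OF sym nb allb uV] show ?thesis
    proof (elim exE conjE)
      fix p q
      assume pV: "p \<in> V - {u}" and qV: "q \<in> V - {u}" and pq: "p \<noteq> q" and spu: "s p u \<noteq> 0"
        and squ: "s q u \<noteq> 0" and nbr: "\<forall>x\<in>V-{u}. x \<noteq> p \<longrightarrow> x \<noteq> q \<longrightarrow> s x u = 0"
        and alt: "s p q = 0 \<or> (V = {u,p,q} \<and> s u p * s u q * s p q < 0)"
      show ?thesis
      proof (cases "s p q = 0")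
        case True
        have "\<not> bal (\<lambda>i j. s i j + 1 * s i u * s j u) (V - {u})"
          by (rule deg2[OF sym uV pV qV pq spu squ nbr True nb])
        then show ?thesis by (intro step[OF uV, of 1]) simp_all
      next
        case False
        then have V3: "V = {u,p,q}" and neg: "s u p * s u q * s p q < 0" using alt by auto
        have up: "u \<noteq> p" and uq: "u \<noteq> q" using pV qV by auto
        show ?thesis by (rule triangle[OF sym V3 up uq pq neg])
      qed
    qed
  qed
qed

theorem theorem3:
  fixes S :: "real^'n^'n"
  assumes "pos_def S" and "irreducible_mat S"
  shows "mr_dual S = CARD('n) - 1 \<longleftrightarrow> sign_nonneg S"
proof -
  have symS: "transpose S = S" using assms(1) by (simp add: pos_def_def symmetric_mat_def)
  have pd: "0 \<le> x \<bullet> (S *v x)" for x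
  proof (cases "x = 0")
    case True then show ?thesis by simp
  next
    case False then show ?thesis using assms(1) by (simp add: pos_def_def less_imp_le)
  qed
  define F where "F = {rank Sh | Sh E. S = E - Sh \<and> psd Sh \<and> psd E \<and> diagonal_mat E}"
  have mr: "mr_dual S = Min F" by (simp add: mr_dual_def F_def)
  have finF: "finite F"
  proof (rule finite_subset[of F "{..CARD('n)}"])
    show "F \<subseteq> {..CARD('n)}"
    proof
      fix r assume "r \<in> F"
      then obtain Sh :: "real^'n^'n" where "r = rank Sh" by (auto simp: F_def)
      then show "r \<in> {..CARD('n)}" using rank_bound[of Sh] by simp
    qed
  qed simp
  have memF: "rank Sh \<in> F" if "S = E - Sh" "psd Sh" "psd E" "diagonal_mat E" for Sh E
    using that by (auto simp: F_def)
  show ?thesis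
  proof
    assume mrn: "mr_dual S = CARD('n) - 1"
    show "sign_nonneg S"
    proof (rule ccontr)
      assume nsn: "\<not> sign_nonneg S"
      define s where "s i j = S$i$j" for i j
      have syms: "\<And>i j. s i j = s j i" using sym_comp[OF symS] by (simp add: s_def)
      have nb: "\<not> bal s UNIV"
      proof
        assume B: "bal s UNIV"
        define d where "d = balw s UNIV"
        have "sign_nonneg S" unfolding sign_nonneg_def diag_conj
        proof (intro exI[of _ d] conjI allI impI)
          fix i show "d i = 1 \<or> d i = -1" unfolding d_def by (rule balw1[OF B])
        next
          fix i j :: 'n assume "i \<noteq> j"
          then have "0 \<le> d i * d j * s i j" unfolding d_def by (intro balw2[OF B]) auto
          then show "0 \<le> d i * S$i$j * d j" by (simp add: s_def mult.commute mult.left_commute)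
        qed
        then show False using nsn by simp
      qed
      obtain g :: "'n \<Rightarrow> real^'n" where g: "\<forall>i\<in>UNIV. \<forall>j\<in>UNIV. i \<noteq> j \<longrightarrow> g i \<bullet> g j = - s i j"
        and dg: "dim (g ` UNIV) + 2 \<le> card (UNIV::'n set)"
        using gram_main[OF syms nb] by blast
      define G :: "real^'n^'n" where "G = (\<chi> i. g i)"
      define Sh where "Sh = G ** transpose G"
      have rowG: "row i G = g i" for i by (simp add: row_def G_def vec_eq_iff)
      have Sh_ent: "Sh$i$j = g i \<bullet> g j" for i j
        by (simp add: Sh_def matrix_mult_transpose_dot_row rowG)
      have "rank Sh \<le> rank G" by (simp add: Sh_def rank_mul_le_left)
      also have "rank G = dim (g ` UNIV)"
      proof -
        have "rows G = range g" by (auto simp: rows_def rowG)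
        then show ?thesis by (simp add: row_rank_def)
      qed
      finally have rk: "rank Sh + 2 \<le> CARD('n)" using dg by simp
      have Shpsd: "psd Sh"
      proof -
        have "transpose Sh = Sh" by (simp add: Sh_def matrix_transpose_mul)
        moreover have "0 \<le> x \<bullet> (Sh *v x)" for x
        proof -
          have "x \<bullet> (Sh *v x) = x \<bullet> (G *v (transpose G *v x))" by (simp only: Sh_def matrix_vector_mul_assoc)
          also have "\<dots> = (x v* G) \<bullet> (transpose G *v x)" by (rule dot_lmul_matrix[symmetric])
          also have "x v* G = transpose G *v x" by (metis transpose_transpose vector_transpose_matrix)
          finally show ?thesis by simp
        qed
        ultimately show ?thesis by (simp add: psd_def symmetric_mat_def)
      qed
      define E where "E = Sh + S"
      have Epsd: "psd E" unfolding E_def by (rule psd_add[OF Shpsd symS pd])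
      have Ediag: "diagonal_mat E" unfolding diagonal_mat_def
      proof (intro allI impI)
        fix i j :: 'n assume "i \<noteq> j"
        then show "E$i$j = 0" using g by (simp add: E_def Sh_ent s_def)
      qed
      have "S = E - Sh" by (simp add: E_def)
      then have "rank Sh \<in> F" using memF Shpsd Epsd Ediag by blast
      then have "Min F \<le> rank Sh" by (rule Min_le[OF finF])
      then show False using mrn mr rk by simp
    qed
  next
    assume sn: "sign_nonneg S"
    obtain Sh0 E0 where f0: "S = E0 - Sh0" "psd Sh0" "psd E0" "diagonal_mat E0"
      and r0: "rank Sh0 \<le> CARD('n) - 1" using upper_exists[OF symS pd sn] by blast
    have in0: "rank Sh0 \<in> F" using memF f0 by blast
    have lb: "CARD('n) - 1 \<le> x" if "x \<in> F" for x
      using that lower_bound[OF symS assms(2) sn] by (auto simp: F_def)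
    have "Min F \<in> F" using finF in0 by (intro Min_in) auto
    then have "CARD('n) - 1 \<le> Min F" by (rule lb)
    moreover have "Min F \<le> rank Sh0" by (rule Min_le[OF finF in0])
    ultimately show "mr_dual S = CARD('n) - 1" using mr r0 by simp
  qed
qed

end
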